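(* Let $P_1$ be a set of $n_1$ points and $P_2$ a set of $n_2$ points in the plane, each in general position, with $n_1,n_2$ even, and let $G_1$ and $G_2$ be their underlying graphs. Then there exist a set $P$ of $n_1+n_2$ points in the plane in general position and a partition $P=Q_1\sqcup Q_2$ such that the underlying graph of $P$ is the disjoint union of two graphs on $Q_1$ and $Q_2$, with no edges between $Q_1$ and $Q_2$, that are isomorphic to $G_1$ and $G_2$ respectively.
   Context: Points are in general position if no three are collinear. For a finite set $P$ of $n$ points in general position with $n$ even, a halving line of $P$ is a line through two points of $P$ that has exactly $(n-2)/2$ points of $P$ strictly on each side. The underlying graph of $P$ has vertex set $P$, and two points are adjacent if and only if the line through them is a halving line of $P$. *)

theory Defs
  imports "HOL-Analysis.Analysis"
begin

type_synonym point = "real \<times> real"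

text \<open>Orientation: positive iff r lies strictly to the left of the directed line p q.\<close>
definition orient :: "point \<Rightarrow> point \<Rightarrow> point \<Rightarrow> real" where
  "orient p q r = (fst q - fst p) * (snd r - snd p) - (snd q - snd p) * (fst r - fst p)"

definition general_position :: "point set \<Rightarrow> bool" where
  "general_position P \<longleftrightarrow>
     (\<forall>p\<in>P. \<forall>q\<in>P. \<forall>r\<in>P. p \<noteq> q \<and> p \<noteq> r \<and> q \<noteq> r \<longrightarrow> \<not> collinear {p, q, r})"

definition halving_line :: "point set \<Rightarrow> point \<Rightarrow> point \<Rightarrow> bool" where
  "halving_line P p q \<longleftrightarrow> p \<in> P \<and> q \<in> P \<and> p \<noteq> q \<and>
     2 * card {r \<in> P. orient p q r > 0} + 2 = card P \<and>
     2 * card {r \<in> P. orient p q r < 0} + 2 = card P"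

definition underlying_adj :: "point set \<Rightarrow> point \<Rightarrow> point \<Rightarrow> bool" where
  "underlying_adj P p q \<longleftrightarrow> halving_line P p q"

end

theory Submission
  imports Defs
begin


lemma orient_cyc: "orient a b c = orient b c a"
  by (simp add: orient_def algebra_simps)
lemma orient_swap: "orient b a c = - orient a b c"
  by (simp add: orient_def algebra_simps)
lemma orient_aac[simp]: "orient a a c = 0" by (simp add: orient_def)
lemma orient_aba[simp]: "orient a b a = 0" by (simp add: orient_def)
lemma orient_abb[simp]: "orient a b b = 0" by (simp add: orient_def)

lemma coll_orient: "collinear {a,b,c} \<longleftrightarrow> orient a b c = 0"
proof -
  have "collinear {a,b,c} = collinear {b,a,c}" by (simp add: insert_commute)
  also have "\<dots> \<longleftrightarrow> b - a = 0 \<or> c - a = 0 \<or> (\<exists>k. c - a = k *\<^sub>R (b - a))"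
  proof -
    have "collinear {b,a,c} \<longleftrightarrow> collinear {0, b-a, c-a}" by (rule collinear_3) (simp add: NO_MATCH_def)
    then show ?thesis by (simp add: collinear_lemma)
  qed
  also have "\<dots> \<longleftrightarrow> orient a b c = 0"
  proof
    assume "b - a = 0 \<or> c - a = 0 \<or> (\<exists>k. c - a = k *\<^sub>R (b - a))"
    then show "orient a b c = 0"
    proof (elim disjE exE)
      fix k assume kk: "c - a = k *\<^sub>R (b - a)"
      have "fst c - fst a = k * (fst b - fst a)" "snd c - snd a = k * (snd b - snd a)"
        using arg_cong[OF kk, of fst] arg_cong[OF kk, of snd] by simp_all
      note eqs = this
      have "orient a b c = (fst b - fst a)*(snd c - snd a) - (snd b - snd a)*(fst c - fst a)"
        by (simp add: orient_def)
      also have "\<dots> = (fst b - fst a)*(k * (snd b - snd a)) - (snd b - snd a)*(k * (fst b - fst a))"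
        by (simp only: eqs)
      also have "\<dots> = 0" by (simp add: algebra_simps)
      finally show ?thesis .
    qed (simp_all add: orient_def)
  next
    assume o: "orient a b c = 0"
    show "b - a = 0 \<or> c - a = 0 \<or> (\<exists>k. c - a = k *\<^sub>R (b - a))"
    proof (cases "fst b = fst a")
      case False
      define k where "k = (fst c - fst a) / (fst b - fst a)"
      have o': "(fst b - fst a) * (snd c - snd a) = (snd b - snd a) * (fst c - fst a)"
        using o by (simp add: orient_def)
      have "fst c - fst a = k * (fst b - fst a)" using False by (simp add: k_def)
      moreover have "snd c - snd a = k * (snd b - snd a)"
      proof -
        have "k * (snd b - snd a) = (snd b - snd a) * (fst c - fst a) / (fst b - fst a)"
          by (simp add: k_def)
        also have "\<dots> = (fst b - fst a) * (snd c - snd a) / (fst b - fst a)" using o' by simp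
        also have "\<dots> = snd c - snd a" using False by simp
        finally show ?thesis by simp
      qed
      ultimately have "c - a = k *\<^sub>R (b - a)" by (simp add: prod_eq_iff)
      then show ?thesis by blast
    next
      case True
      show ?thesis
      proof (cases "snd b = snd a")
        case True2: True
        then show ?thesis using True by (simp add: prod_eq_iff)
      next
        case False
        define k where "k = (snd c - snd a) / (snd b - snd a)"
        have o': "(fst b - fst a) * (snd c - snd a) = (snd b - snd a) * (fst c - fst a)"
          using o by (simp add: orient_def)
        have "snd c - snd a = k * (snd b - snd a)" using False by (simp add: k_def)
        moreover have "fst c - fst a = k * (fst b - fst a)"
        proof -
          have "fst c - fst a = 0" using o' True False by simp
          then show ?thesis using True by simp
        qed
        ultimately have "c - a = k *\<^sub>R (b - a)" by (simp add: prod_eq_iff)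
        then show ?thesis by blast
      qed
    qed
  qed
  finally show ?thesis .
qed

lemma exists_inj_comb:
  assumes "finite S" "inj_on (\<lambda>p. (a p, b p)) S"
  shows "\<exists>t::real. inj_on (\<lambda>p. a p + t * b p) S"
proof -
  let ?B = "(\<lambda>(p,q). (a q - a p) / (b p - b q)) ` (S \<times> S)"
  have "finite ?B" using assms by auto
  then obtain t where t: "t \<notin> ?B"
    using ex_new_if_finite[OF infinite_UNIV_char_0] by blast
  have "inj_on (\<lambda>p. a p + t * b p) S"
  proof (rule inj_onI)
    fix p q assume pq: "p \<in> S" "q \<in> S" "a p + t * b p = a q + t * b q"
    show "p = q"
    proof (cases "b p = b q")
      case True
      then have "a p = a q" using pq by simp
      then show ?thesis using True assms(2) pq by (auto dest: inj_onD)
    next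
      case False
      then have "t = (a q - a p) / (b p - b q)" using pq(3) by (simp add: field_simps)
      moreover have "(\<lambda>(p,q). (a q - a p) / (b p - b q)) (p,q) \<in> ?B"
        using pq by (intro imageI) simp
      ultimately have "t \<in> ?B" by simp
      then show ?thesis using t by blast
    qed
  qed
  then show ?thesis by blast
qed


lemma exists_split_real:
  fixes T :: "real set"
  assumes "finite T"
  shows "k \<le> card T \<Longrightarrow> \<exists>c. c \<notin> T \<and> card {x\<in>T. x < c} = k"
  using assms
proof (induction T arbitrary: k rule: finite_linorder_max_induct)
  case empty
  then show ?case by auto
next
  case (insert b A)
  show ?case
  proof (cases "k = card (insert b A)")
    case True
    have "{x \<in> insert b A. x < b + 1} = insert b A" using insert by force
    moreover have "b + 1 \<notin> insert b A" using insert by force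
    ultimately show ?thesis using True by metis
  next
    case False
    then have "k \<le> card A" using insert by auto
    then obtain c where c: "c \<notin> A" "card {x\<in>A. x < c} = k" using insert by blast
    show ?thesis
    proof (cases "c < b")
      case True
      then have "{x \<in> insert b A. x < c} = {x\<in>A. x < c}" by auto
      then show ?thesis using c True by auto
    next
      case cb: False
      have "{x\<in>A. x < c} = A" using insert cb by force
      then have kA: "k = card A" using c by simp
      define c' where "c' = (if A = {} then b - 1 else (Max A + b) / 2)"
      have "c' < b" using insert by (auto simp: c'_def)
      have "\<forall>x\<in>A. x < c'"
      proof
        fix x assume "x \<in> A"
        then have "Max A \<in> A" using insert by (intro Max_in) auto
        then have "x \<le> Max A" "Max A < b" using insert \<open>x \<in> A\<close> by auto
        then show "x < c'" using \<open>x\<in>A\<close> by (auto simp: c'_def)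
      qed
      have "c' \<notin> A" using \<open>\<forall>x\<in>A. x < c'\<close> by auto
      have "{x \<in> insert b A. x < c'} = A" using \<open>c' < b\<close> \<open>\<forall>x\<in>A. x < c'\<close> by auto
      then show ?thesis using kA \<open>c' < b\<close> \<open>c' \<notin> A\<close> by auto
    qed
  qed
qed

lemma exists_split:
  fixes h :: "'a \<Rightarrow> real"
  assumes "finite S" "inj_on h S" "even (card S)"
  shows "\<exists>c. (\<forall>p\<in>S. h p \<noteq> c) \<and> card {p\<in>S. h p - c > 0} = card S div 2
            \<and> card {p\<in>S. h p - c < 0} = card S div 2"
proof -
  have cT: "card (h ` S) = card S" using assms card_image by blast
  have le: "card S div 2 \<le> card (h ` S)" using cT by simp
  have fi: "finite (h ` S)" using assms(1) by simp
  obtain c where c: "c \<notin> h ` S" "card {x\<in>h ` S. x < c} = card S div 2"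
    using exists_split_real[OF fi le] by blast
  have im: "h ` {p\<in>S. h p < c} = {x\<in>h ` S. x < c}" by auto
  have "inj_on h {p\<in>S. h p < c}" using assms(2) by (rule inj_on_subset) auto
  then have "card {p\<in>S. h p < c} = card (h ` {p\<in>S. h p < c})" by (simp add: card_image)
  then have lo: "card {p\<in>S. h p < c} = card S div 2" using im c(2) by simp
  have SU: "S = {p\<in>S. h p < c} \<union> {p\<in>S. h p > c}" using c by force
  have "card ({p\<in>S. h p < c} \<union> {p\<in>S. h p > c}) = card {p\<in>S. h p < c} + card {p\<in>S. h p > c}"
    by (rule card_Un_disjoint) (use assms(1) in auto)
  then have "card S = card {p\<in>S. h p < c} + card {p\<in>S. h p > c}" using SU by simp
  moreover obtain m where "card S = 2 * m" using assms(3) by (auto elim: evenE)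
  ultimately have hi: "card {p\<in>S. h p > c} = card S div 2" using lo by simp
  have e1: "{p\<in>S. h p - c > 0} = {p\<in>S. h p > c}" by auto
  have e2: "{p\<in>S. h p - c < 0} = {p\<in>S. h p < c}" by auto
  have "\<forall>p\<in>S. h p \<noteq> c" using c(1) by blast
  then show ?thesis using lo hi e1 e2 by (intro exI[of _ c]) simp
qed


lemma sgn_eventually:
  fixes f :: "real \<Rightarrow> real"
  assumes "isCont f 0" "f 0 = 0 \<Longrightarrow> \<forall>e. f e = 0"
  shows "eventually (\<lambda>e. sgn (f e) = sgn (f 0)) (at_right 0)"
proof (cases "f 0 = 0")
  case True then show ?thesis using assms(2) by simp
next
  case False
  have lim: "(f \<longlongrightarrow> f 0) (at_right 0)"
    using assms(1) by (simp add: isCont_def filterlim_at_split)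
  show ?thesis
  proof (cases "f 0 > 0")
    case True
    have "eventually (\<lambda>e. f e > 0) (at_right 0)" using order_tendstoD(1)[OF lim True] .
    then show ?thesis by eventually_elim (use True in simp)
  next
    case f: False
    then have "f 0 < 0" using False by simp
    have "eventually (\<lambda>e. f e < 0) (at_right 0)" using order_tendstoD(2)[OF lim \<open>f 0 < 0\<close>] .
    then show ?thesis by eventually_elim (use \<open>f 0 < 0\<close> in simp)
  qed
qed




lemma isCont_orient3:
  "isCont A x \<Longrightarrow> isCont B x \<Longrightarrow> isCont C x \<Longrightarrow> isCont (\<lambda>e. orient (A e) (B e) (C e)) x"
  unfolding orient_def by (intro continuous_intros)

lemma sgn_ev2:
  fixes f :: "real \<Rightarrow> real"
  assumes "isCont f 0" "f 0 = m" "m = 0 \<Longrightarrow> \<forall>e. f e = 0"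
  shows "eventually (\<lambda>e. sgn (f e) = sgn m) (at_right 0)"
  using sgn_eventually[of f] assms by simp

lemma card_split:
  assumes "finite A" "finite B" "inj_on f A" "inj_on g B" "\<forall>a\<in>A. \<forall>b\<in>B. f a \<noteq> g b"
  shows "card {r \<in> f ` A \<union> g ` B. \<Phi> r} = card {a\<in>A. \<Phi> (f a)} + card {b\<in>B. \<Phi> (g b)}"
proof -
  have eq: "{r \<in> f ` A \<union> g ` B. \<Phi> r} = f ` {a\<in>A. \<Phi> (f a)} \<union> g ` {b\<in>B. \<Phi> (g b)}" by auto
  have i1: "inj_on f {a\<in>A. \<Phi> (f a)}" using assms(3) by (rule inj_on_subset) auto
  have i2: "inj_on g {b\<in>B. \<Phi> (g b)}" using assms(4) by (rule inj_on_subset) auto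
  have d: "f ` {a\<in>A. \<Phi> (f a)} \<inter> g ` {b\<in>B. \<Phi> (g b)} = {}" using assms(5) by auto
  have "card (f ` {a\<in>A. \<Phi> (f a)} \<union> g ` {b\<in>B. \<Phi> (g b)})
        = card (f ` {a\<in>A. \<Phi> (f a)}) + card (g ` {b\<in>B. \<Phi> (g b)})"
    by (rule card_Un_disjoint) (use assms(1,2) d in auto)
  also have "\<dots> = card {a\<in>A. \<Phi> (f a)} + card {b\<in>B. \<Phi> (g b)}"
    using i1 i2 by (simp add: card_image)
  finally show ?thesis using eq by simp
qed

lemma halving_sgn:
  "halving_line P a b \<longleftrightarrow> a \<in> P \<and> b \<in> P \<and> a \<noteq> b \<and>
     2 * card {r\<in>P. sgn (orient a b r) = 1} + 2 = card P \<and>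
     2 * card {r\<in>P. sgn (orient a b r) = -1} + 2 = card P"
  unfolding halving_line_def by (simp add: sgn_1_pos sgn_1_neg)

lemma halving_sym: "halving_line P a b \<longleftrightarrow> halving_line P b a"
proof -
  have "\<And>r. orient b a r = - orient a b r" by (rule orient_swap)
  then have "{r\<in>P. orient b a r > 0} = {r\<in>P. orient a b r < 0}"
            "{r\<in>P. orient b a r < 0} = {r\<in>P. orient a b r > 0}" by auto
  then show ?thesis unfolding halving_line_def by auto
qed

lemma card_half:
  fixes h :: "'a \<Rightarrow> real"
  assumes "d \<noteq> 0" "card {r\<in>S. h r > 0} = m" "card {r\<in>S. h r < 0} = m" "s = 1 \<or> s = -1"
  shows "card {r\<in>S. sgn (d * h r) = s} = m"
proof (cases "d > 0")
  case True
  then have "\<And>r. sgn (d * h r) = sgn (h r)" by (simp add: sgn_mult)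
  then have "{r\<in>S. sgn (d * h r) = s} = {r\<in>S. sgn (h r) = s}" by simp
  moreover have "{r\<in>S. sgn (h r) = 1} = {r\<in>S. h r > 0}" by (simp add: sgn_1_pos)
  moreover have "{r\<in>S. sgn (h r) = -1} = {r\<in>S. h r < 0}" by (simp add: sgn_1_neg)
  ultimately show ?thesis using assms by auto
next
  case False
  then have "d < 0" using assms(1) by simp
  then have "\<And>r. sgn (d * h r) = - sgn (h r)" by (simp add: sgn_mult)
  then have "{r\<in>S. sgn (d * h r) = s} = {r\<in>S. sgn (h r) = - s}" by auto
  moreover have "{r\<in>S. sgn (h r) = 1} = {r\<in>S. h r > 0}" by (simp add: sgn_1_pos)
  moreover have "{r\<in>S. sgn (h r) = -1} = {r\<in>S. h r < 0}" by (simp add: sgn_1_neg)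
  ultimately show ?thesis using assms by auto
qed

lemma orient_F:
  "orient (fst p + t * snd p - c, e * snd p) (fst q + t * snd q - c, e * snd q) (fst r + t * snd r - c, e * snd r)
   = e * orient p q r"
  by (simp add: orient_def algebra_simps)

lemma orient_G:
  "orient (e * fst p, snd p + t * fst p - c) (e * fst q, snd q + t * fst q - c) (e * fst r, snd r + t * fst r - c)
   = e * orient p q r"
  by (simp add: orient_def algebra_simps)



lemma sgn_nz: "sgn (x::real) = sgn y \<Longrightarrow> y \<noteq> 0 \<Longrightarrow> x \<noteq> 0"
  by (auto simp: sgn_eq_0_iff)

theorem mainTheorem1:
  fixes P1 P2 :: "point set"
  assumes "finite P1" and "finite P2"
    and "general_position P1" and "general_position P2"
    and "even (card P1)" and "even (card P2)"
  shows "\<exists>P Q1 Q2 (f :: point \<Rightarrow> point) (g :: point \<Rightarrow> point).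
           finite P \<and> card P = card P1 + card P2 \<and> general_position P \<and>
           Q1 \<union> Q2 = P \<and> Q1 \<inter> Q2 = {} \<and>
           (\<forall>p\<in>Q1. \<forall>q\<in>Q2. \<not> underlying_adj P p q \<and> \<not> underlying_adj P q p) \<and>
           bij_betw f P1 Q1 \<and>
           (\<forall>p\<in>P1. \<forall>q\<in>P1. underlying_adj P1 p q \<longleftrightarrow> underlying_adj P (f p) (f q)) \<and>
           bij_betw g P2 Q2 \<and>
           (\<forall>p\<in>P2. \<forall>q\<in>P2. underlying_adj P2 p q \<longleftrightarrow> underlying_adj P (g p) (g q))"
proof -
  have i1: "inj_on (\<lambda>p. (fst p, snd p)) P1" by (simp add: inj_on_def)
  obtain t1 where t1: "inj_on (\<lambda>p. fst p + t1 * snd p) P1"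
    using exists_inj_comb[OF assms(1) i1] by blast
  obtain c1 where c1: "\<forall>p\<in>P1. fst p + t1 * snd p \<noteq> c1"
      "card {p\<in>P1. fst p + t1 * snd p - c1 > 0} = card P1 div 2"
      "card {p\<in>P1. fst p + t1 * snd p - c1 < 0} = card P1 div 2"
    using exists_split[OF assms(1) t1 assms(5)] by blast
  have i2: "inj_on (\<lambda>p. (snd p, fst p)) P2" by (auto simp: inj_on_def prod_eq_iff)
  obtain t2 where t2: "inj_on (\<lambda>p. snd p + t2 * fst p) P2"
    using exists_inj_comb[OF assms(2) i2] by blast
  obtain c2 where c2: "\<forall>p\<in>P2. snd p + t2 * fst p \<noteq> c2"
      "card {p\<in>P2. snd p + t2 * fst p - c2 > 0} = card P2 div 2"
      "card {p\<in>P2. snd p + t2 * fst p - c2 < 0} = card P2 div 2"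
    using exists_split[OF assms(2) t2 assms(6)] by blast
  define X1 where "X1 = (\<lambda>p::point. fst p + t1 * snd p - c1)"
  define Y2 where "Y2 = (\<lambda>p::point. snd p + t2 * fst p - c2)"
  have X1inj: "X1 a = X1 b \<Longrightarrow> a \<in> P1 \<Longrightarrow> b \<in> P1 \<Longrightarrow> a = b" for a b
    using t1 unfolding X1_def by (auto dest: inj_onD)
  have Y2inj: "Y2 a = Y2 b \<Longrightarrow> a \<in> P2 \<Longrightarrow> b \<in> P2 \<Longrightarrow> a = b" for a b
    using t2 unfolding Y2_def by (auto dest: inj_onD)
  have X1nz: "p \<in> P1 \<Longrightarrow> X1 p \<noteq> 0" for p using c1(1) by (auto simp: X1_def)
  have Y2nz: "p \<in> P2 \<Longrightarrow> Y2 p \<noteq> 0" for p using c2(1) by (auto simp: Y2_def)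
  have X1pos: "card {p\<in>P1. X1 p > 0} = card P1 div 2" using c1(2) by (simp add: X1_def)
  have X1neg: "card {p\<in>P1. X1 p < 0} = card P1 div 2" using c1(3) by (simp add: X1_def)
  have Y2pos: "card {p\<in>P2. Y2 p > 0} = card P2 div 2" using c2(2) by (simp add: Y2_def)
  have Y2neg: "card {p\<in>P2. Y2 p < 0} = card P2 div 2" using c2(3) by (simp add: Y2_def)
  define F where "F = (\<lambda>(e::real) (p::point). (X1 p, e * snd p))"
  define G where "G = (\<lambda>(e::real) (p::point). (e * fst p, Y2 p))"
  have cF: "isCont (\<lambda>e. F e p) 0" for p unfolding F_def by (intro continuous_intros)
  have cG: "isCont (\<lambda>e. G e p) 0" for p unfolding G_def by (intro continuous_intros)

  have core1: "eventually (\<lambda>e. sgn (orient (F e p) (F e q) (G e r)) = sgn ((X1 q - X1 p) * Y2 r)) (at_right 0)"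
    if pqr: "p\<in>P1" "q\<in>P1" "r\<in>P2" for p q r
  proof (rule sgn_ev2)
    show "isCont (\<lambda>e. orient (F e p) (F e q) (G e r)) 0" by (intro isCont_orient3 cF cG)
    show "orient (F 0 p) (F 0 q) (G 0 r) = (X1 q - X1 p) * Y2 r"
      by (simp add: F_def G_def orient_def algebra_simps)
    assume "(X1 q - X1 p) * Y2 r = 0"
    then have "X1 q = X1 p" using Y2nz pqr by auto
    then have "p = q" using X1inj pqr by metis
    then show "\<forall>e. orient (F e p) (F e q) (G e r) = 0" by simp
  qed
  have core2: "eventually (\<lambda>e. sgn (orient (G e p) (G e q) (F e r)) = sgn ((Y2 p - Y2 q) * X1 r)) (at_right 0)"
    if pqr: "p\<in>P2" "q\<in>P2" "r\<in>P1" for p q r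
  proof (rule sgn_ev2)
    show "isCont (\<lambda>e. orient (G e p) (G e q) (F e r)) 0" by (intro isCont_orient3 cF cG)
    show "orient (G 0 p) (G 0 q) (F 0 r) = (Y2 p - Y2 q) * X1 r"
      by (simp add: F_def G_def orient_def algebra_simps)
    assume "(Y2 p - Y2 q) * X1 r = 0"
    then have "Y2 p = Y2 q" using X1nz pqr by auto
    then have "p = q" using Y2inj pqr by metis
    then show "\<forall>e. orient (G e p) (G e q) (F e r) = 0" by simp
  qed
  have core3: "eventually (\<lambda>e. sgn (orient (F e p) (G e q) (F e r)) = sgn ((- Y2 q) * (X1 r - X1 p))) (at_right 0)"
    if pqr: "p\<in>P1" "q\<in>P2" "r\<in>P1" for p q r
  proof (rule sgn_ev2)
    show "isCont (\<lambda>e. orient (F e p) (G e q) (F e r)) 0" by (intro isCont_orient3 cF cG)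
    show "orient (F 0 p) (G 0 q) (F 0 r) = (- Y2 q) * (X1 r - X1 p)"
      by (simp add: F_def G_def orient_def algebra_simps)
    assume "(- Y2 q) * (X1 r - X1 p) = 0"
    then have "X1 r = X1 p" using Y2nz pqr by auto
    then have "r = p" using X1inj pqr by metis
    then show "\<forall>e. orient (F e p) (G e q) (F e r) = 0" by simp
  qed
  have core4: "eventually (\<lambda>e. sgn (orient (F e p) (G e q) (G e r)) = sgn ((- X1 p) * (Y2 r - Y2 q))) (at_right 0)"
    if pqr: "p\<in>P1" "q\<in>P2" "r\<in>P2" for p q r
  proof (rule sgn_ev2)
    show "isCont (\<lambda>e. orient (F e p) (G e q) (G e r)) 0" by (intro isCont_orient3 cF cG)
    show "orient (F 0 p) (G 0 q) (G 0 r) = (- X1 p) * (Y2 r - Y2 q)"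
      by (simp add: F_def G_def orient_def algebra_simps)
    assume "(- X1 p) * (Y2 r - Y2 q) = 0"
    then have "Y2 r = Y2 q" using X1nz pqr by auto
    then have "r = q" using Y2inj pqr by metis
    then show "\<forall>e. orient (F e p) (G e q) (G e r) = 0" by simp
  qed
  have core5: "eventually (\<lambda>e. sgn (X1 p - e * fst q) = sgn (X1 p)) (at_right 0)"
    if pq: "p\<in>P1" "q\<in>P2" for p q
  proof (rule sgn_ev2)
    show "isCont (\<lambda>e. X1 p - e * fst q) 0" by (intro continuous_intros)
    show "X1 p - 0 * fst q = X1 p" by simp
    assume "X1 p = 0"
    then show "\<forall>e. X1 p - e * fst q = 0" using X1nz pq by auto
  qed
  have ev: "eventually (\<lambda>e. 0 < e \<and>
      (\<forall>p\<in>P1. \<forall>q\<in>P1. \<forall>r\<in>P2. sgn (orient (F e p) (F e q) (G e r)) = sgn ((X1 q - X1 p) * Y2 r)) \<and>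
      (\<forall>p\<in>P2. \<forall>q\<in>P2. \<forall>r\<in>P1. sgn (orient (G e p) (G e q) (F e r)) = sgn ((Y2 p - Y2 q) * X1 r)) \<and>
      (\<forall>p\<in>P1. \<forall>q\<in>P2. \<forall>r\<in>P1. sgn (orient (F e p) (G e q) (F e r)) = sgn ((- Y2 q) * (X1 r - X1 p))) \<and>
      (\<forall>p\<in>P1. \<forall>q\<in>P2. \<forall>r\<in>P2. sgn (orient (F e p) (G e q) (G e r)) = sgn ((- X1 p) * (Y2 r - Y2 q))) \<and>
      (\<forall>p\<in>P1. \<forall>q\<in>P2. sgn (X1 p - e * fst q) = sgn (X1 p))) (at_right 0)"
    apply (intro eventually_conj eventually_at_right_less eventually_ball_finite ballI)
    using core1 core2 core3 core4 core5 assms(1,2) by blast+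
  obtain e where e0: "0 < e"
    and E1: "\<forall>p\<in>P1. \<forall>q\<in>P1. \<forall>r\<in>P2. sgn (orient (F e p) (F e q) (G e r)) = sgn ((X1 q - X1 p) * Y2 r)"
    and E2: "\<forall>p\<in>P2. \<forall>q\<in>P2. \<forall>r\<in>P1. sgn (orient (G e p) (G e q) (F e r)) = sgn ((Y2 p - Y2 q) * X1 r)"
    and E3: "\<forall>p\<in>P1. \<forall>q\<in>P2. \<forall>r\<in>P1. sgn (orient (F e p) (G e q) (F e r)) = sgn ((- Y2 q) * (X1 r - X1 p))"
    and E4: "\<forall>p\<in>P1. \<forall>q\<in>P2. \<forall>r\<in>P2. sgn (orient (F e p) (G e q) (G e r)) = sgn ((- X1 p) * (Y2 r - Y2 q))"
    and E5: "\<forall>p\<in>P1. \<forall>q\<in>P2. sgn (X1 p - e * fst q) = sgn (X1 p)"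
    using eventually_happens'[OF trivial_limit_at_right_real ev] by blast

  have injF: "inj_on (F e) P1"
  proof (rule inj_onI)
    fix a b assume "a \<in> P1" "b \<in> P1" "F e a = F e b"
    then show "a = b" using X1inj by (simp add: F_def)
  qed
  have injG: "inj_on (G e) P2"
  proof (rule inj_onI)
    fix a b assume "a \<in> P2" "b \<in> P2" "G e a = G e b"
    then show "a = b" using Y2inj by (simp add: G_def)
  qed
  have disj: "\<forall>a\<in>P1. \<forall>b\<in>P2. F e a \<noteq> G e b"
  proof (intro ballI)
    fix a b assume ab: "a \<in> P1" "b \<in> P2"
    have "X1 a - e * fst b \<noteq> 0" using sgn_nz[of "X1 a - e * fst b" "X1 a"] E5 ab X1nz by blast
    then show "F e a \<noteq> G e b" by (auto simp: F_def G_def)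
  qed
  define Q1 where "Q1 = F e ` P1"
  define Q2 where "Q2 = G e ` P2"
  define P where "P = Q1 \<union> Q2"
  have cnt: "card {r\<in>P. \<Phi> r} = card {a\<in>P1. \<Phi> (F e a)} + card {b\<in>P2. \<Phi> (G e b)}" for \<Phi>
    unfolding P_def Q1_def Q2_def by (rule card_split[OF assms(1,2) injF injG disj])
  have cardP: "card P = card P1 + card P2" using cnt[of "\<lambda>_. True"] by simp
  have finP: "finite P" using assms(1,2) by (simp add: P_def Q1_def Q2_def)
  have QQ: "Q1 \<inter> Q2 = {}"
  proof (rule ccontr)
    assume "Q1 \<inter> Q2 \<noteq> {}"
    then obtain x where "x \<in> Q1" "x \<in> Q2" by blast
    then obtain a b where "a \<in> P1" "x = F e a" "b \<in> P2" "x = G e b" unfolding Q1_def Q2_def by blast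
    then show False using disj by metis
  qed
  obtain m1 where m1: "card P1 = 2 * m1" using assms(5) by (auto elim: evenE)
  obtain m2 where m2: "card P2 = 2 * m2" using assms(6) by (auto elim: evenE)

  have oFFF: "orient (F e a) (F e b) (F e c) \<noteq> 0"
    if "a \<in> P1" "b \<in> P1" "c \<in> P1" "F e a \<noteq> F e b" "F e a \<noteq> F e c" "F e b \<noteq> F e c" for a b c
  proof -
    have "orient (F e a) (F e b) (F e c) = e * orient a b c" unfolding F_def X1_def by (simp add: orient_F)
    moreover have "a \<noteq> b" "a \<noteq> c" "b \<noteq> c" using that(4-6) by auto
    moreover have "\<not> collinear {a, b, c}" if "a \<noteq> b" "a \<noteq> c" "b \<noteq> c"
      using assms(3) that \<open>a \<in> _\<close> \<open>b \<in> _\<close> \<open>c \<in> _\<close> unfolding general_position_def by blast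
    ultimately show ?thesis using e0 by (simp add: coll_orient)
  qed
  have oGGG: "orient (G e a) (G e b) (G e c) \<noteq> 0"
    if "a \<in> P2" "b \<in> P2" "c \<in> P2" "G e a \<noteq> G e b" "G e a \<noteq> G e c" "G e b \<noteq> G e c" for a b c
  proof -
    have "orient (G e a) (G e b) (G e c) = e * orient a b c" unfolding G_def Y2_def by (simp add: orient_G)
    moreover have "a \<noteq> b" "a \<noteq> c" "b \<noteq> c" using that(4-6) by auto
    moreover have "\<not> collinear {a, b, c}" if "a \<noteq> b" "a \<noteq> c" "b \<noteq> c"
      using assms(4) that \<open>a \<in> _\<close> \<open>b \<in> _\<close> \<open>c \<in> _\<close> unfolding general_position_def by blast
    ultimately show ?thesis using e0 by (simp add: coll_orient)
  qed
  have oFFG: "orient (F e a) (F e b) (G e c) \<noteq> 0"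
    if "a \<in> P1" "b \<in> P1" "c \<in> P2" "F e a \<noteq> F e b" for a b c
  proof (rule sgn_nz)
    show "sgn (orient (F e a) (F e b) (G e c)) = sgn ((X1 b - X1 a) * Y2 c)" using E1 that by blast
    have "X1 b \<noteq> X1 a" using X1inj[of b a] that by auto
    then show "(X1 b - X1 a) * Y2 c \<noteq> 0" using Y2nz that by simp
  qed
  have oGGF: "orient (G e a) (G e b) (F e c) \<noteq> 0"
    if "a \<in> P2" "b \<in> P2" "c \<in> P1" "G e a \<noteq> G e b" for a b c
  proof (rule sgn_nz)
    show "sgn (orient (G e a) (G e b) (F e c)) = sgn ((Y2 a - Y2 b) * X1 c)" using E2 that by blast
    have "Y2 b \<noteq> Y2 a" using Y2inj[of b a] that by auto
    then show "(Y2 a - Y2 b) * X1 c \<noteq> 0" using X1nz that by simp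
  qed
  have oFGF: "orient (F e a) (G e b) (F e c) \<noteq> 0"
    if "a \<in> P1" "b \<in> P2" "c \<in> P1" "F e a \<noteq> F e c" for a b c
  proof (rule sgn_nz)
    show "sgn (orient (F e a) (G e b) (F e c)) = sgn ((- Y2 b) * (X1 c - X1 a))" using E3 that by blast
    have "X1 c \<noteq> X1 a" using X1inj[of c a] that by auto
    then show "(- Y2 b) * (X1 c - X1 a) \<noteq> 0" using Y2nz that by simp
  qed
  have oFGG: "orient (F e a) (G e b) (G e c) \<noteq> 0"
    if "a \<in> P1" "b \<in> P2" "c \<in> P2" "G e b \<noteq> G e c" for a b c
  proof (rule sgn_nz)
    show "sgn (orient (F e a) (G e b) (G e c)) = sgn ((- X1 a) * (Y2 c - Y2 b))" using E4 that by blast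
    have "Y2 c \<noteq> Y2 b" using Y2inj[of c b] that by auto
    then show "(- X1 a) * (Y2 c - Y2 b) \<noteq> 0" using X1nz that by simp
  qed
  have oGFF: "orient (G e a) (F e b) (F e c) \<noteq> 0"
    if "a \<in> P2" "b \<in> P1" "c \<in> P1" "F e b \<noteq> F e c" for a b c
    using oFFG[OF that(2,3,1,4)] orient_cyc by metis
  have oGFG: "orient (G e a) (F e b) (G e c) \<noteq> 0"
    if "a \<in> P2" "b \<in> P1" "c \<in> P2" "G e a \<noteq> G e c" for a b c
  proof -
    have "G e c \<noteq> G e a" using that(4) by auto
    from oFGG[OF that(2,3,1) this] show ?thesis using orient_cyc by metis
  qed
  have inP: "(\<exists>a\<in>P1. w = F e a) \<or> (\<exists>a\<in>P2. w = G e a)" if "w \<in> P" for w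
    using that unfolding P_def Q1_def Q2_def by blast
  have onz: "orient x y z \<noteq> 0" if "x \<in> P" "y \<in> P" "z \<in> P" "x \<noteq> y" "x \<noteq> z" "y \<noteq> z" for x y z
    using inP[OF that(1)] inP[OF that(2)] inP[OF that(3)] that(4-6)
    apply (elim disjE bexE)
    apply (simp_all add: oFFF oGGG oFFG oGGF oFGF oFGG oGFF oGFG)
    done
  have gpP: "general_position P"
    unfolding general_position_def using onz by (simp add: coll_orient)

  have adj1: "underlying_adj P1 p q \<longleftrightarrow> underlying_adj P (F e p) (F e q)" if pq: "p \<in> P1" "q \<in> P1" for p q
  proof (cases "p = q")
    case True then show ?thesis by (simp add: underlying_adj_def halving_line_def)
  next
    case False
    have s1: "card {r\<in>P. sgn (orient (F e p) (F e q) r) = s} = card {r\<in>P1. sgn (orient p q r) = s} + m2"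
      if s: "s = 1 \<or> s = -1" for s
    proof -
      have "orient (F e p) (F e q) (F e a) = e * orient p q a" for a
        unfolding F_def X1_def by (simp add: orient_F)
      then have a: "{a\<in>P1. sgn (orient (F e p) (F e q) (F e a)) = s} = {r\<in>P1. sgn (orient p q r) = s}"
        using e0 by (simp add: sgn_mult)
      have b: "{b\<in>P2. sgn (orient (F e p) (F e q) (G e b)) = s} = {b\<in>P2. sgn ((X1 q - X1 p) * Y2 b) = s}"
        using E1 pq by auto
      have "X1 q - X1 p \<noteq> 0" using X1inj[of q p] pq False by auto
      then have "card {b\<in>P2. sgn ((X1 q - X1 p) * Y2 b) = s} = card P2 div 2"
        by (rule card_half[OF _ Y2pos Y2neg s])
      then show ?thesis using cnt[of "\<lambda>r. sgn (orient (F e p) (F e q) r) = s"] a b m2 by simp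
    qed
    have "F e p \<in> P" "F e q \<in> P" using pq by (auto simp: P_def Q1_def)
    moreover have "F e p \<noteq> F e q" using injF pq False by (auto dest: inj_onD)
    ultimately show ?thesis unfolding underlying_adj_def halving_sgn
      using s1[of 1] s1[of "-1"] cardP m2 pq False by auto
  qed
  have adj2: "underlying_adj P2 p q \<longleftrightarrow> underlying_adj P (G e p) (G e q)" if pq: "p \<in> P2" "q \<in> P2" for p q
  proof (cases "p = q")
    case True then show ?thesis by (simp add: underlying_adj_def halving_line_def)
  next
    case False
    have s1: "card {r\<in>P. sgn (orient (G e p) (G e q) r) = s} = m1 + card {r\<in>P2. sgn (orient p q r) = s}"
      if s: "s = 1 \<or> s = -1" for s
    proof -
      have "orient (G e p) (G e q) (G e a) = e * orient p q a" for a
        unfolding G_def Y2_def by (simp add: orient_G)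
      then have b: "{a\<in>P2. sgn (orient (G e p) (G e q) (G e a)) = s} = {r\<in>P2. sgn (orient p q r) = s}"
        using e0 by (simp add: sgn_mult)
      have a: "{b\<in>P1. sgn (orient (G e p) (G e q) (F e b)) = s} = {b\<in>P1. sgn ((Y2 p - Y2 q) * X1 b) = s}"
        using E2 pq by auto
      have "Y2 p - Y2 q \<noteq> 0" using Y2inj[of p q] pq False by auto
      then have "card {b\<in>P1. sgn ((Y2 p - Y2 q) * X1 b) = s} = card P1 div 2"
        by (rule card_half[OF _ X1pos X1neg s])
      then show ?thesis using cnt[of "\<lambda>r. sgn (orient (G e p) (G e q) r) = s"] a b m1 by simp
    qed
    have "G e p \<in> P" "G e q \<in> P" using pq by (auto simp: P_def Q2_def)
    moreover have "G e p \<noteq> G e q" using injG pq False by (auto dest: inj_onD)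
    ultimately show ?thesis unfolding underlying_adj_def halving_sgn
      using s1[of 1] s1[of "-1"] cardP m1 pq False by auto
  qed
  have cross: "\<not> halving_line P (F e p) (G e q)" if pq: "p \<in> P1" "q \<in> P2" for p q
  proof
    assume h: "halving_line P (F e p) (G e q)"
    define A where "A = (\<lambda>s. card {a\<in>P1. sgn ((- Y2 q) * (X1 a - X1 p)) = s})"
    define B where "B = (\<lambda>s. card {b\<in>P2. sgn ((- X1 p) * (Y2 b - Y2 q)) = s})"
    have cs: "card {r\<in>P. sgn (orient (F e p) (G e q) r) = s} = A s + B s" for s
    proof -
      have "{a\<in>P1. sgn (orient (F e p) (G e q) (F e a)) = s} = {a\<in>P1. sgn ((- Y2 q) * (X1 a - X1 p)) = s}"
        using E3 pq by auto
      moreover have "{b\<in>P2. sgn (orient (F e p) (G e q) (G e b)) = s} = {b\<in>P2. sgn ((- X1 p) * (Y2 b - Y2 q)) = s}"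
        using E4 pq by auto
      ultimately show ?thesis using cnt[of "\<lambda>r. sgn (orient (F e p) (G e q) r) = s"] by (simp add: A_def B_def)
    qed
    from h have h1: "2 * (A 1 + B 1) + 2 = card P" and h2: "2 * (A (-1) + B (-1)) + 2 = card P"
      unfolding halving_sgn cs by auto
    have fA: "finite {a\<in>P1. sgn ((- Y2 q) * (X1 a - X1 p)) = s}" for s using assms(1) by simp
    have fB: "finite {b\<in>P2. sgn ((- X1 p) * (Y2 b - Y2 q)) = s}" for s using assms(2) by simp
    have X1n: "card {a\<in>P1. X1 a < 0} = m1" "card {a\<in>P1. X1 a > 0} = m1" using X1neg X1pos m1 by auto
    have Y2n: "card {a\<in>P2. Y2 a < 0} = m2" "card {a\<in>P2. Y2 a > 0} = m2" using Y2neg Y2pos m2 by auto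
    consider "Y2 q > 0" "X1 p > 0" | "Y2 q > 0" "X1 p < 0" | "Y2 q < 0" "X1 p > 0" | "Y2 q < 0" "X1 p < 0"
      using X1nz[OF pq(1)] Y2nz[OF pq(2)] by linarith
    then have big: "m1 + m2 \<le> A 1 + B 1 \<or> m1 + m2 \<le> A (-1) + B (-1)"
    proof cases
      case 1
      have "card {a\<in>P1. X1 a < 0} \<le> A 1" unfolding A_def
        by (rule card_mono[OF fA]) (use 1 in \<open>auto simp: sgn_1_pos sgn_1_neg zero_less_mult_iff mult_less_0_iff\<close>)
      moreover have "card {b\<in>P2. Y2 b < 0} \<le> B 1" unfolding B_def
        by (rule card_mono[OF fB]) (use 1 in \<open>auto simp: sgn_1_pos sgn_1_neg zero_less_mult_iff mult_less_0_iff\<close>)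
      ultimately show ?thesis using X1n Y2n by linarith
    next
      case 2
      have "card {a\<in>P1. X1 a > 0} \<le> A (-1)" unfolding A_def
        by (rule card_mono[OF fA]) (use 2 in \<open>auto simp: sgn_1_pos sgn_1_neg zero_less_mult_iff mult_less_0_iff\<close>)
      moreover have "card {b\<in>P2. Y2 b < 0} \<le> B (-1)" unfolding B_def
        by (rule card_mono[OF fB]) (use 2 in \<open>auto simp: sgn_1_pos sgn_1_neg zero_less_mult_iff mult_less_0_iff\<close>)
      ultimately show ?thesis using X1n Y2n by linarith
    next
      case 3
      have "card {a\<in>P1. X1 a < 0} \<le> A (-1)" unfolding A_def
        by (rule card_mono[OF fA]) (use 3 in \<open>auto simp: sgn_1_pos sgn_1_neg zero_less_mult_iff mult_less_0_iff\<close>)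
      moreover have "card {b\<in>P2. Y2 b > 0} \<le> B (-1)" unfolding B_def
        by (rule card_mono[OF fB]) (use 3 in \<open>auto simp: sgn_1_pos sgn_1_neg zero_less_mult_iff mult_less_0_iff\<close>)
      ultimately show ?thesis using X1n Y2n by linarith
    next
      case 4
      have "card {a\<in>P1. X1 a > 0} \<le> A 1" unfolding A_def
        by (rule card_mono[OF fA]) (use 4 in \<open>auto simp: sgn_1_pos sgn_1_neg zero_less_mult_iff mult_less_0_iff\<close>)
      moreover have "card {b\<in>P2. Y2 b > 0} \<le> B 1" unfolding B_def
        by (rule card_mono[OF fB]) (use 4 in \<open>auto simp: sgn_1_pos sgn_1_neg zero_less_mult_iff mult_less_0_iff\<close>)
      ultimately show ?thesis using X1n Y2n by linarith
    qed
    then show False using h1 h2 cardP m1 m2 by (elim disjE) presburger+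
  qed
  have crossQ: "\<forall>p\<in>Q1. \<forall>q\<in>Q2. \<not> underlying_adj P p q \<and> \<not> underlying_adj P q p"
  proof (intro ballI)
    fix p q assume "p \<in> Q1" "q \<in> Q2"
    then obtain a b where "a \<in> P1" "p = F e a" "b \<in> P2" "q = G e b" unfolding Q1_def Q2_def by blast
    then show "\<not> underlying_adj P p q \<and> \<not> underlying_adj P q p"
      using cross[of a b] halving_sym[of P p q] unfolding underlying_adj_def by blast
  qed
  have bF: "bij_betw (F e) P1 Q1" by (simp add: bij_betw_def injF Q1_def)
  have bG: "bij_betw (G e) P2 Q2" by (simp add: bij_betw_def injG Q2_def)
  show ?thesis
    apply (rule exI[of _ P], rule exI[of _ Q1], rule exI[of _ Q2], rule exI[of _ "F e"], rule exI[of _ "G e"])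
    using finP cardP gpP QQ crossQ bF bG adj1 adj2 by (simp add: P_def)
qed

end
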